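(* Let $n\geq 0$ be an integer, $r\in\mathbf{N}$ (so $r\geq 1$) and $k\in\mathbf{Z}$. Then \begin{align*} \tilde{A}_{n}^{(r,k)}(x)=\sum_{j=0}^{n}\Bigg\{\sum_{l=0}^{n-j}\sum_{a=0}^{n-j-l}\sum_{a_{1}+\cdots+a_{r}=a}\binom{n}{l+j}\binom{n-j-l}{a}\binom{a}{a_{1},\ldots,a_{r}} S_{1}(l+j,j)\left(\prod_{i=1}^{r}B_{a_{i}}^{(a_{i})}\right)\tilde{C}_{n-j-l-a}^{(k)}\Bigg\}x^{j}, \end{align*} where the inner sum runs over all $r$-tuples of nonnegative integers $(a_1,\ldots,a_r)$ with sum $a$.
   Context: For $k\in\mathbf{Z}$, $Lif_{k}(x)=\sum_{m=0}^{\infty}\frac{x^{m}}{m!(m+1)^{k}}$. For integers $r\geq 0$, $k\in\mathbf{Z}$, the polynomials $\tilde{A}_{n}^{(r,k)}(x)$ are defined by \[\left(\frac{t}{(1+t)\log(1+t)}\right)^{r}Lif_{k}\left(-\log(1+t)\right)(1+t)^{x}=\sum_{n=0}^{\infty}\tilde{A}_{n}^{(r,k)}(x)\frac{t^{n}}{n!}.\] The poly-Cauchy numbers of the second kind $\tilde{C}_{n}^{(k)}$ are defined by $Lif_{k}\left(-\log(1+t)\right)=\sum_{n=0}^{\infty}\tilde{C}_{n}^{(k)}\frac{t^{n}}{n!}$. For an integer $\alpha\geq 0$, the Bernoulli numbers of order $\alpha$ are defined by $\left(\frac{t}{e^{t}-1}\right)^{\alpha}=\sum_{n=0}^{\infty}B_{n}^{(\alpha)}\frac{t^{n}}{n!}$.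 $S_{1}(n,m)$ denotes the signed Stirling numbers of the first kind, defined by $x(x-1)\cdots(x-n+1)=\sum_{m=0}^{n}S_{1}(n,m)x^{m}$; $\binom{a}{a_1,\ldots,a_r}$ is the multinomial coefficient. *)

theory Defs
  imports "HOL-Computational_Algebra.Computational_Algebra"
begin

definition Lif_fps :: "int \<Rightarrow> real fps" where
  "Lif_fps k = Abs_fps (\<lambda>m. 1 / (fact m * (real m + 1) powi k))"

text \<open>log(1+t) is fps_ln 1; the series Lif_k(-log(1+t)).\<close>
definition LifC_fps :: "int \<Rightarrow> real fps" where
  "LifC_fps k = Lif_fps k oo (- fps_ln 1)"

definition polyCauchy2 :: "int \<Rightarrow> nat \<Rightarrow> real" where
  "polyCauchy2 k n = fact n * (LifC_fps k $ n)"

text \<open>t/((1+t) log(1+t)) = inverse((1+t) * (log(1+t)/t)).\<close>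
definition tlog_fps :: "real fps" where
  "tlog_fps = inverse ((1 + fps_X) * fps_shift 1 (fps_ln 1))"

text \<open>Generating function of the polynomials A~_n^{(r,k)}(x); (1+t)^x = fps_binomial x.\<close>
definition Atilde :: "nat \<Rightarrow> int \<Rightarrow> nat \<Rightarrow> real \<Rightarrow> real" where
  "Atilde r k n x = fact n * ((tlog_fps ^ r * LifC_fps k * fps_binomial x) $ n)"

text \<open>Bernoulli numbers of order alpha: (t/(e^t-1))^alpha.\<close>
definition bernoulli_ord :: "nat \<Rightarrow> nat \<Rightarrow> real" where
  "bernoulli_ord \<alpha> n = fact n * ((inverse (fps_shift 1 (fps_exp 1 - 1)) ^ \<alpha>) $ n)"

definition S1 :: "nat \<Rightarrow> nat \<Rightarrow> int" where
  "S1 n m = coeff (\<Prod>i<n. [:- of_nat i, 1:]) m"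

definition multinom :: "nat \<Rightarrow> nat \<Rightarrow> (nat \<Rightarrow> nat) \<Rightarrow> real" where
  "multinom a r f = fact a / (\<Prod>i=1..r. fact (f i))"

end

theory Submission imports Defs begin

lemma u_E: "fps_exp (1::real) - 1 = fps_shift 1 (fps_exp 1 - 1) * fps_X"
  by (intro fps_ext) auto

lemma ln_L: "fps_ln (1::real) = fps_shift 1 (fps_ln 1) * fps_X"
  by (intro fps_ext) auto

lemma power_nth_zero: "(b::real fps) $ 0 = 0 \<Longrightarrow> j < i \<Longrightarrow> (b ^ i) $ j = 0"
  using startsby_zero_power_prefix by blast

lemma key_coeff:
  fixes E :: "real fps"
  assumes E0: "E $ 0 = 1"
  shows "((E + fps_X * fps_deriv E) * inverse E ^ (k+1)) $ k = (if k = 0 then 1 else 0)"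
proof (cases k)
  case 0 then show ?thesis using E0 by simp
next
  case (Suc m)
  define F where "F = inverse E"
  have EF: "E * F = 1" using E0 unfolding F_def by (simp add: inverse_mult_eq_1')
  have F': "fps_deriv F = - fps_deriv E * F^2" unfolding F_def using E0 by (simp add: fps_inverse_deriv)
  have "(E + fps_X * fps_deriv E) * F ^ (k+1) = F^k * (E * F) + fps_X * (fps_deriv E * F^2) * F^m"
    by (simp add: Suc algebra_simps power2_eq_square)
  also have "\<dots> = F^k - fps_X * (fps_deriv F * F^m)" using EF F' by (simp add: algebra_simps)
  finally have eq: "(E + fps_X * fps_deriv E) * F ^ (k+1) = F^k - fps_X * (fps_deriv F * F^m)" .
  have d: "fps_deriv (F^k) = of_nat k * fps_deriv F * F^m" by (subst fps_deriv_power') (simp add: Suc)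
  have "(fps_deriv (F^k)) $ m = real k * (F^k) $ k" by (simp only: fps_deriv_nth Suc) (simp del: power_Suc)
  moreover have "(fps_deriv (F^k)) $ m = real k * (fps_deriv F * F^m) $ m"
    unfolding d by (simp add: mult.assoc fps_of_nat)
  ultimately have "(fps_deriv F * F^m) $ m = (F^k) $ k" using Suc by simp
  then show ?thesis unfolding F_def[symmetric] eq using Suc by simp
qed

lemma compose_nth_ext:
  fixes H b :: "real fps"
  assumes "b $ 0 = 0" "j \<le> n"
  shows "(H oo b) $ j = (\<Sum>i=0..n. H $ i * (b ^ i) $ j)"
proof -
  have "(H oo b) $ j = (\<Sum>i=0..j. H $ i * (b ^ i) $ j)" by (rule fps_compose_nth)
  also have "\<dots> = (\<Sum>i=0..n. H $ i * (b ^ i) $ j)"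
    by (rule sum.mono_neutral_left) (use assms power_nth_zero in auto)
  finally show ?thesis .
qed

lemma cov:
  fixes E H :: "real fps"
  assumes E0: "E $ 0 = 1"
  shows "((H oo (E * fps_X)) * fps_deriv (E * fps_X) * inverse E ^ (n+1)) $ n = H $ n"
proof -
  define u where "u = E * fps_X"
  define W where "W = fps_deriv u * inverse E ^ (n+1)"
  have u0: "u $ 0 = 0" unfolding u_def by simp
  have du: "fps_deriv u = E + fps_X * fps_deriv E" unfolding u_def by (simp add: algebra_simps)
  have EI: "E ^ i * inverse E ^ i = 1" for i
    using E0 by (simp flip: power_mult_distrib add: inverse_mult_eq_1')
  have uiW: "(u ^ i * W) $ n = (if i = n then 1 else 0)" if "i \<le> n" for i
  proof -
    define k where "k = n - i"
    have nk: "n + 1 = (k + 1) + i" using that unfolding k_def by simp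
    have "u ^ i * W = fps_X ^ i * ((E + fps_X * fps_deriv E) * inverse E ^ (k+1) * (E ^ i * inverse E ^ i))"
      unfolding u_def W_def du nk power_add by (simp add: power_mult_distrib algebra_simps)
    also have "\<dots> = fps_X ^ i * ((E + fps_X * fps_deriv E) * inverse E ^ (k+1))" using EI by simp
    finally have "(u ^ i * W) $ n = ((E + fps_X * fps_deriv E) * inverse E ^ (k+1)) $ k"
      using that by (simp add: fps_X_power_mult_nth k_def)
    also have "\<dots> = (if k = 0 then 1 else 0)" using key_coeff[OF E0] by blast
    finally show ?thesis using that k_def by auto
  qed
  have "((H oo u) * W) $ n = (\<Sum>j=0..n. (H oo u) $ j * W $ (n - j))" by (rule fps_mult_nth)
  also have "\<dots> = (\<Sum>j=0..n. \<Sum>i=0..n. H $ i * ((u ^ i) $ j * W $ (n - j)))"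
    by (rule sum.cong) (auto simp: compose_nth_ext[OF u0] sum_distrib_right mult.assoc)
  also have "\<dots> = (\<Sum>i=0..n. H $ i * (\<Sum>j=0..n. (u ^ i) $ j * W $ (n - j)))"
    by (subst sum.swap) (simp add: sum_distrib_left)
  also have "\<dots> = (\<Sum>i=0..n. H $ i * (u ^ i * W) $ n)" by (simp add: fps_mult_nth)
  also have "\<dots> = (\<Sum>i=0..n. (if i = n then H $ i else 0))"
    by (rule sum.cong) (auto simp: uiW)
  also have "\<dots> = H $ n" by simp
  finally show ?thesis unfolding W_def u_def by (simp add: mult.assoc)
qed

lemma norlund: "tlog_fps $ n = bernoulli_ord n n / fact n"
proof -
  define E :: "real fps" where "E = fps_shift 1 (fps_exp 1 - 1)"
  define u :: "real fps" where "u = fps_exp 1 - 1"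
  define L :: "real fps" where "L = fps_shift 1 (fps_ln 1)"
  have E0: "E $ 0 = 1" unfolding E_def by simp
  have uE: "u = E * fps_X" unfolding u_def E_def by (rule u_E)
  have u0: "u $ 0 = 0" and u1: "u $ 1 = 1" unfolding u_def by simp_all
  have du: "fps_deriv u = fps_exp 1" unfolding u_def by simp
  have lnu: "fps_ln 1 oo u = fps_X"
    using fps_ln_fps_exp_inv[of "1::real"] fps_inv[of u] u0 u1 unfolding u_def by simp
  have "fps_X = (L * fps_X) oo u" using lnu ln_L unfolding L_def by simp
  also have "\<dots> = (L oo u) * u" using u0 by (simp add: fps_compose_mult_distrib)
  finally have "((L oo u) * E) * fps_X = 1 * fps_X" unfolding uE by (simp add: mult.assoc)
  then have "fps_shift 1 (((L oo u) * E) * fps_X) = fps_shift 1 (1 * fps_X)" by simp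
  then have LE: "(L oo u) * E = 1" by (simp only: fps_shift_times_fps_X')
  have L0: "L $ 0 = 1" unfolding L_def by (simp add: fps_ln_nth)
  have c1: "((1 + fps_X) * L) oo u = fps_exp 1 * (L oo u)"
    using u0 by (simp add: fps_compose_mult_distrib fps_compose_add_distrib u_def)
  have "tlog_fps oo u = inverse (((1 + fps_X) * L) oo u)"
    unfolding tlog_fps_def L_def[symmetric] using u0 L0 by (intro fps_inverse_compose) auto
  also have "\<dots> = inverse (fps_exp 1) * E"
    unfolding c1 fps_inverse_mult using fps_inverse_unique[OF LE] by simp
  finally have "(tlog_fps oo u) * fps_deriv u = E * (inverse (fps_exp 1) * fps_exp 1)"
    unfolding du by (simp add: algebra_simps)
  also have "\<dots> = E" by (simp add: inverse_mult_eq_1)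
  finally have K: "(tlog_fps oo u) * fps_deriv u = E" .
  have "tlog_fps $ n = ((tlog_fps oo u) * fps_deriv u * inverse E ^ (n+1)) $ n"
    using cov[OF E0, of tlog_fps n] unfolding uE by simp
  also have "\<dots> = (inverse E ^ n * (E * inverse E)) $ n" unfolding K by (simp add: algebra_simps)
  also have "\<dots> = (inverse E ^ n) $ n" using E0 by (simp add: inverse_mult_eq_1')
  finally show ?thesis unfolding bernoulli_ord_def E_def by simp
qed


definition SS :: "nat \<Rightarrow> nat \<Rightarrow> (nat \<Rightarrow> nat) set" where
  "SS r m = {f \<in> {1..r} \<rightarrow>\<^sub>E {0..m}. (\<Sum>i=1..r. f i) = m}"

lemma SS_finite: "finite (SS r m)"
  unfolding SS_def by (rule finite_subset[of _ "{1..r} \<rightarrow>\<^sub>E {0..m}"]) (auto intro: finite_PiE)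

lemma SS_bij:
  "(\<Sum>(q,h)\<in>Sigma {0..m} (SS r). g (h(Suc r := m - q))) = (\<Sum>f\<in>SS (Suc r) m. g f)"
proof (rule sum.reindex_bij_witness[where i = "\<lambda>f. (m - f (Suc r), f(Suc r := undefined))"
      and j = "\<lambda>(q,h). h(Suc r := m - q)"])
  fix b assume b: "b \<in> SS (Suc r) m"
  then have s: "(\<Sum>i=1..r. b i) + b (Suc r) = m" by (simp add: SS_def)
  then show "(case (m - b (Suc r), b(Suc r := undefined)) of (q, h) \<Rightarrow> h(Suc r := m - q)) = b"
    by (auto simp: fun_eq_iff)
  have "(\<Sum>i=1..r. (b(Suc r := undefined)) i) = (\<Sum>i=1..r. b i)" by (rule sum.cong) auto
  then show "(m - b (Suc r), b(Suc r := undefined)) \<in> Sigma {0..m} (SS r)"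
    using b s member_le_sum[of _ "{1..r}" b] by (auto simp: SS_def PiE_iff extensional_def)
next
  fix a assume a: "a \<in> Sigma {0..m} (SS r)"
  then obtain q h where a': "a = (q,h)" "q \<le> m" "h \<in> SS r q" by auto
  then have hs: "(\<Sum>i=1..r. h i) = q" and hP: "h \<in> {1..r} \<rightarrow>\<^sub>E {0..q}" by (auto simp: SS_def)
  have hr: "h (Suc r) = undefined" using hP by (auto simp: PiE_iff extensional_def)
  show "(m - (case a of (q, h) \<Rightarrow> h(Suc r := m - q)) (Suc r),
          (case a of (q, h) \<Rightarrow> h(Suc r := m - q))(Suc r := undefined)) = a"
    using a' hr \<open>q \<le> m\<close> by (auto simp: fun_eq_iff)
  have "(\<Sum>i=1..Suc r. (h(Suc r := m - q)) i) = (\<Sum>i=1..r. (h(Suc r := m - q)) i) + (m - q)" by simp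
  also have "(\<Sum>i=1..r. (h(Suc r := m - q)) i) = q"
    using hs sum.cong[OF refl, of "{1..r}" "h(Suc r := m - q)" h] by auto
  finally have "(\<Sum>i=1..Suc r. (h(Suc r := m - q)) i) = m" using a' by simp
  then show "(case a of (q, h) \<Rightarrow> h(Suc r := m - q)) \<in> SS (Suc r) m"
  proof -
    assume sm: "(\<Sum>i=1..Suc r. (h(Suc r := m - q)) i) = m"
    have hm: "h i \<le> m" if "1 \<le> i" "i \<le> r" for i 
    proof -
      have "h i \<in> {0..q}" using hP that by (auto simp: PiE_iff)
      then show ?thesis using a'(2) by simp
    qed
    show ?thesis using a' hP sm
      by (auto simp: SS_def PiE_iff extensional_def le_Suc_eq hm)
  qed
qed auto

lemma fps_power_nth_SS:
  fixes a :: "real fps"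
  shows "(a ^ r) $ m = (\<Sum>f\<in>SS r m. \<Prod>i=1..r. a $ (f i))"
proof (induction r arbitrary: m)
  case 0
  show ?case by (cases m) (auto simp: SS_def)
next
  case (Suc r)
  have "(a ^ Suc r) $ m = (\<Sum>q=0..m. (a ^ r) $ q * a $ (m - q))"
    by (simp only: fps_mult_nth power_Suc2)
  also have "\<dots> = (\<Sum>q=0..m. \<Sum>h\<in>SS r q. (\<Prod>i=1..r. a $ (h i)) * a $ (m - q))"
    by (simp add: Suc sum_distrib_right)
  also have "\<dots> = (\<Sum>(q,h)\<in>Sigma {0..m} (SS r). (\<Prod>i=1..r. a $ (h i)) * a $ (m - q))"
    by (rule sum.Sigma) (auto simp: SS_finite)
  also have "\<dots> = (\<Sum>(q,h)\<in>Sigma {0..m} (SS r). (\<lambda>f. \<Prod>i=1..Suc r. a $ (f i)) (h(Suc r := m - q)))"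
  proof (rule sum.cong[OF refl], clarify)
    fix q h
    have "(\<Prod>i=1..r. a $ ((h(Suc r := m - q)) i)) = (\<Prod>i=1..r. a $ (h i))"
      by (rule prod.cong) auto
    then show "(\<Prod>i=1..r. a $ (h i)) * a $ (m - q) = (\<Prod>i=1..Suc r. a $ ((h(Suc r := m - q)) i))"
      by simp
  qed
  also have "\<dots> = (\<Sum>f\<in>SS (Suc r) m. \<Prod>i=1..Suc r. a $ (f i))" by (rule SS_bij)
  finally show ?case .
qed


lemma map_poly_of_int_mult:
  "map_poly (real_of_int) (p * q) = map_poly real_of_int p * map_poly real_of_int q"
  by (intro poly_eqI) (simp add: coeff_map_poly coeff_mult)

lemma map_poly_S1: "map_poly real_of_int (\<Prod>i<L. [:- of_nat i, 1:]) = (\<Prod>i<L. [:- real i, 1:])"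
proof (induction L)
  case (Suc L)
  have lin: "map_poly real_of_int [:- of_nat L, 1:] = [:- real L, 1:]" by (simp add: map_poly_pCons)
  show ?case by (simp only: prod.lessThan_Suc map_poly_of_int_mult Suc lin)
qed simp

lemma S1_poly: "(\<Prod>i<L. (x - real i)) = (\<Sum>j=0..L. real_of_int (S1 L j) * x ^ j)"
proof -
  define p :: "real poly" where "p = (\<Prod>i<L. [:- real i, 1:])"
  have dp: "degree p \<le> L"
  proof -
    have "degree p \<le> (\<Sum>i<L. degree [:- real i, 1:])"
      unfolding p_def using degree_prod_sum_le[of "{..<L}" "\<lambda>i. [:- real i, 1:]"] by (simp add: o_def)
    then show ?thesis by simp
  qed
  have cp: "coeff p j = real_of_int (S1 L j)" for j
    unfolding S1_def p_def map_poly_S1[symmetric] by (simp add: coeff_map_poly)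
  have "(\<Prod>i<L. (x - real i)) = poly p x" unfolding p_def by (simp add: poly_prod)
  also have "\<dots> = (\<Sum>j\<le>degree p. coeff p j * x ^ j)" by (rule poly_altdef)
  also have "\<dots> = (\<Sum>j\<le>L. coeff p j * x ^ j)"
    by (rule sum.mono_neutral_left) (use dp in \<open>auto simp: coeff_eq_0\<close>)
  finally show ?thesis by (simp add: cp atLeast0AtMost)
qed

lemma binom_nth: "fps_binomial x $ L = (\<Sum>j=0..L. real_of_int (S1 L j) * x ^ j) / fact L"
  by (simp add: gbinomial_prod_rev S1_poly[symmetric] atLeast0LessThan)

lemma term_eq:
  assumes "l + j \<le> n" "a \<le> n - j - l"
  shows "real (n choose (l+j)) * real (n-j-l choose a) * multinom a r f
          * real_of_int (S1 (l+j) j)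
          * (\<Prod>i=1..r. bernoulli_ord (f i) (f i))
          * polyCauchy2 k (n-j-l-a)
       = fact n / fact (l+j) * real_of_int (S1 (l+j) j)
          * (\<Prod>i=1..r. bernoulli_ord (f i) (f i) / fact (f i)) * LifC_fps k $ (n-(l+j)-a)"
proof -
  have e1: "n - j - l = n - (l+j)" by simp
  have pf: "(\<Prod>i=1..r. fact (f i) :: real) \<noteq> 0" by (simp add: prod_zero_iff)
  have b1: "real (n choose (l+j)) = fact n / (fact (l+j) * fact (n - (l+j)))"
    using assms by (simp add: binomial_fact)
  have b2: "real (n - (l+j) choose a) = fact (n - (l+j)) / (fact a * fact (n - (l+j) - a))"
    using assms by (simp add: binomial_fact)
  show ?thesis unfolding e1 b1 b2 multinom_def polyCauchy2_def prod_dividef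
    using pf by (simp add: field_simps)
qed

theorem corollary4:
  fixes n r :: nat and k :: int and x :: real
  assumes "r \<ge> 1"
  shows "Atilde r k n x =
    (\<Sum>j=0..n. (\<Sum>l=0..n-j. \<Sum>a=0..n-j-l.
        \<Sum>f\<in>{f \<in> {1..r} \<rightarrow>\<^sub>E {0..a}. (\<Sum>i=1..r. f i) = a}.
          real (n choose (l+j)) * real (n-j-l choose a) * multinom a r f
          * real_of_int (S1 (l+j) j)
          * (\<Prod>i=1..r. bernoulli_ord (f i) (f i))
          * polyCauchy2 k (n-j-l-a)) * x ^ j)"
proof -
  define P where "P = tlog_fps ^ r"
  define C where "C = LifC_fps k"
  define G where "G = (\<lambda>j L. \<Sum>a=0..n-L. \<Sum>f\<in>SS r a.
      fact n / fact L * real_of_int (S1 L j)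
          * (\<Prod>i=1..r. bernoulli_ord (f i) (f i) / fact (f i)) * C $ (n-L-a) * x ^ j)"
  have Pa: "P $ a = (\<Sum>f\<in>SS r a. \<Prod>i=1..r. bernoulli_ord (f i) (f i) / fact (f i))" for a
    unfolding P_def fps_power_nth_SS norlund ..
  have step: "fact n * (fps_binomial x $ L * (P * C) $ (n - L)) = (\<Sum>j=0..L. G j L)" for L
  proof -
    have "fact n * (fps_binomial x $ L * (P * C) $ (n - L)) =
      (\<Sum>j=0..L. fact n * (real_of_int (S1 L j) * x ^ j / fact L) * (P * C) $ (n - L))"
      by (simp del: fps_binomial_nth add: binom_nth sum_divide_distrib sum_distrib_left sum_distrib_right mult_ac)
    also have "\<dots> = (\<Sum>j=0..L. G j L)"
    proof (rule sum.cong[OF refl])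
      fix j
      have "fact n * (real_of_int (S1 L j) * x ^ j / fact L) * (P * C) $ (n - L) =
        (\<Sum>a=0..n-L. \<Sum>f\<in>SS r a. fact n * (real_of_int (S1 L j) * x ^ j / fact L) *
            ((\<Prod>i=1..r. bernoulli_ord (f i) (f i) / fact (f i)) * C $ (n-L-a)))"
        by (simp add: fps_mult_nth Pa sum_distrib_left sum_distrib_right)
      also have "\<dots> = G j L" unfolding G_def
        by (intro sum.cong refl) (simp add: mult_ac)
      finally show "fact n * (real_of_int (S1 L j) * x ^ j / fact L) * (P * C) $ (n - L) = G j L" .
    qed
    finally show ?thesis .
  qed
  have "Atilde r k n x = fact n * ((fps_binomial x * (P * C)) $ n)"
    unfolding Atilde_def P_def C_def by (simp add: mult_ac)
  also have "\<dots> = (\<Sum>L=0..n. fact n * (fps_binomial x $ L * (P * C) $ (n - L)))"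
    by (simp add: fps_mult_nth sum_distrib_left)
  also have "\<dots> = (\<Sum>L=0..n. \<Sum>j=0..L. G j L)" by (rule sum.cong[OF refl]) (rule step)
  also have "\<dots> = (\<Sum>(j,l)\<in>{(j,l). j + l \<le> n}. G j (j + l))"
    using sum.triangle_reindex_eq[of "\<lambda>j l. G j (j + l)" n] by (simp add: atLeast0AtMost)
  also have "\<dots> = (\<Sum>j=0..n. \<Sum>l=0..n-j. G j (j + l))"
  proof -
    have "{(j,l). j + l \<le> n} = Sigma {0..n} (\<lambda>j. {0..n-j})" by auto
    then show ?thesis by (simp add: sum.Sigma)
  qed
  also have "\<dots> = (\<Sum>j=0..n. (\<Sum>l=0..n-j. \<Sum>a=0..n-j-l. \<Sum>f\<in>SS r a.
          real (n choose (l+j)) * real (n-j-l choose a) * multinom a r f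
          * real_of_int (S1 (l+j) j)
          * (\<Prod>i=1..r. bernoulli_ord (f i) (f i))
          * polyCauchy2 k (n-j-l-a)) * x ^ j)"
    unfolding sum_distrib_right
  proof (rule sum.cong[OF refl], rule sum.cong[OF refl])
    fix j l assume j: "j \<in> {0..n}" and l: "l \<in> {0..n-j}"
    show "G j (j + l) = (\<Sum>a=0..n-j-l. \<Sum>f\<in>SS r a. (real (n choose (l+j)) * real (n-j-l choose a) * multinom a r f
          * real_of_int (S1 (l+j) j)
          * (\<Prod>i=1..r. bernoulli_ord (f i) (f i))
          * polyCauchy2 k (n-j-l-a)) * x ^ j)"
      unfolding G_def
    proof (rule sum.cong, simp, rule sum.cong[OF refl])
      fix a f assume a: "a \<in> {0..n - j - l}"
      have e: "j + l = l + j" by simp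
      have a': "a \<le> n - j - l" and lj: "l + j \<le> n" using a j l by auto
      show "fact n / fact (j + l) * real_of_int (S1 (j + l) j) *
          (\<Prod>i=1..r. bernoulli_ord (f i) (f i) / fact (f i)) * C $ (n - (j + l) - a) * x ^ j
          = (real (n choose (l+j)) * real (n-j-l choose a) * multinom a r f
          * real_of_int (S1 (l+j) j)
          * (\<Prod>i=1..r. bernoulli_ord (f i) (f i))
          * polyCauchy2 k (n-j-l-a)) * x ^ j"
        unfolding e C_def term_eq[OF lj a'] by simp
    qed
  qed
  finally show ?thesis unfolding SS_def .
qed

end
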